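(* Let $(m,Q)$ be a deformation pair of the lattice polytope $P$. Then the map $\xi_{(m,Q)}:\widetilde M\to\widetilde M$, $\xi_{(m,Q)}(h)=h-\eta_Q(\pi_M(h))\,m$, maps the monoid $S_P$ bijectively onto the monoid $S_{P_{(m,Q)}}$, with inverse $\xi_{(-m,Q)}$.
   Context: $N\cong\mathbb{Z}^n$, $M$ dual, $\widetilde M=M\oplus\mathbb{Z}$ with projections $\pi_M,\pi_{\mathbb{Z}}$. For a lattice polytope $P$: $\sigma$ the cone generated by $\{(v,1):v\in P\}$, $S_P=\sigma^\vee\cap\widetilde M$. For a polytope $Q$ and $c\in M$, $\eta_Q(c)=-\min_{v\in Q}\langle v,c\rangle$. $\varphi_m(n)=\langle\pi_M(m),n\rangle+\pi_{\mathbb{Z}}(m)$. A deformation pair $(m,Q)$ of $P$: $m\in\widetilde M$, $Q\subset\{n:\langle\pi_M(m),n\rangle=0\}$ a lattice polytope such that $iQ$ is a Minkowski summand of $P\cap(\varphi_m=i)$ for all $i\in\mathbb{N}$ with nonempty slice. Laurent polynomials are normalized (coefficient $1$ at vertices of the Newton polytope $\Delta$); $f$ is $(m,g)$-mutable if $f=\sum_if_i$ with $f_i$ supported on $(\varphi_m=i)\cap N$ and $g^i\mid f_i$ for $i\ge0$, and $\operatorname{mut}^g_mf=\sum_if_i/g^i$. $P_{(m,Q)}:=\Delta(\operatorname{mut}^g_mf)$ for any $f,g$ with $\Delta(f)=P$, $\Delta(g)=Q$, $f$ $(m,g)$-mutable (such exist and the result does not depend on the choice). *)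

theory Defs
  imports "HOL-Analysis.Analysis"
begin

text \<open>N = Z^n is the integer lattice inside real^'n; M is identified with the same
 lattice (pairing = inner product); Mtilde = M x Z inside real^'n x real.\<close>

definition lattice :: "(real^'n) set" where
  "lattice = {v. \<forall>i. v $ i \<in> \<int>}"

definition Mtilde :: "((real^'n) \<times> real) set" where
  "Mtilde = {h. fst h \<in> lattice \<and> snd h \<in> \<int>}"

definition polytope :: "(real^'n) set \<Rightarrow> bool" where
  "polytope P \<longleftrightarrow> (\<exists>V. finite V \<and> V \<noteq> {} \<and> P = convex hull V)"

definition lattice_polytope :: "(real^'n) set \<Rightarrow> bool" where
  "lattice_polytope P \<longleftrightarrow> (\<exists>V. finite V \<and> V \<noteq> {} \<and> V \<subseteq> lattice \<and> P = convex hull V)"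

definition cone_over :: "(real^'n) set \<Rightarrow> ((real^'n) \<times> real) set" where
  "cone_over P = convex_cone hull ((\<lambda>v. (v, 1::real)) ` P)"

definition S_monoid :: "(real^'n) set \<Rightarrow> ((real^'n) \<times> real) set" where
  "S_monoid P = {h \<in> Mtilde. \<forall>w \<in> cone_over P. 0 \<le> h \<bullet> w}"

definition eta :: "(real^'n) set \<Rightarrow> real^'n \<Rightarrow> real" where
  "eta Q c = - Inf ((\<lambda>v. v \<bullet> c) ` Q)"

definition xi :: "(real^'n) \<times> real \<Rightarrow> (real^'n) set \<Rightarrow> (real^'n) \<times> real \<Rightarrow> (real^'n) \<times> real" where
  "xi m Q h = h - eta Q (fst h) *\<^sub>R m"

definition phi :: "(real^'n) \<times> real \<Rightarrow> real^'n \<Rightarrow> real" where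
  "phi m x = fst m \<bullet> x + snd m"

definition minkowski_sum :: "(real^'n) set \<Rightarrow> (real^'n) set \<Rightarrow> (real^'n) set" where
  "minkowski_sum A B = {a + b | a b. a \<in> A \<and> b \<in> B}"

definition deformation_pair :: "(real^'n) set \<Rightarrow> (real^'n) \<times> real \<Rightarrow> (real^'n) set \<Rightarrow> bool" where
  "deformation_pair P m Q \<longleftrightarrow>
     m \<in> Mtilde \<and> lattice_polytope Q \<and> Q \<subseteq> {x. fst m \<bullet> x = 0} \<and>
     (\<forall>i::nat. P \<inter> {x. phi m x = real i} \<noteq> {} \<longrightarrow>
        (\<exists>R. polytope R \<and>
             P \<inter> {x. phi m x = real i} = minkowski_sum ((\<lambda>x. real i *\<^sub>R x) ` Q) R))"

text \<open>Laurent polynomials in n variables with complex coefficients: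
 finitely supported functions on the lattice.\<close>

definition supp :: "(real^'n \<Rightarrow> complex) \<Rightarrow> (real^'n) set" where
  "supp f = {x. f x \<noteq> 0}"

definition laurent :: "(real^'n \<Rightarrow> complex) \<Rightarrow> bool" where
  "laurent f \<longleftrightarrow> finite (supp f) \<and> supp f \<subseteq> lattice"

definition newton :: "(real^'n \<Rightarrow> complex) \<Rightarrow> (real^'n) set" where
  "newton f = convex hull (supp f)"

definition normalized :: "(real^'n \<Rightarrow> complex) \<Rightarrow> bool" where
  "normalized f \<longleftrightarrow> laurent f \<and> (\<forall>v. v extreme_point_of newton f \<longrightarrow> f v = 1)"

definition lmult :: "(real^'n \<Rightarrow> complex) \<Rightarrow> (real^'n \<Rightarrow> complex) \<Rightarrow> (real^'n \<Rightarrow> complex)" where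
  "lmult f g = (\<lambda>x. \<Sum>y\<in>supp f. f y * g (x - y))"

definition lpow :: "(real^'n \<Rightarrow> complex) \<Rightarrow> nat \<Rightarrow> (real^'n \<Rightarrow> complex)" where
  "lpow g k = (lmult g ^^ k) (\<lambda>x. if x = 0 then 1 else 0)"

definition slice :: "(real^'n) \<times> real \<Rightarrow> (real^'n \<Rightarrow> complex) \<Rightarrow> int \<Rightarrow> (real^'n \<Rightarrow> complex)" where
  "slice m f i = (\<lambda>x. if phi m x = real_of_int i then f x else 0)"

definition mutable :: "(real^'n) \<times> real \<Rightarrow> (real^'n \<Rightarrow> complex) \<Rightarrow> (real^'n \<Rightarrow> complex) \<Rightarrow> bool" where
  "mutable m g f \<longleftrightarrow> laurent f \<and>
     (\<forall>i::nat. \<exists>h. laurent h \<and> lmult h (lpow g i) = slice m f (int i))"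

definition ldiv_slice :: "(real^'n) \<times> real \<Rightarrow> (real^'n \<Rightarrow> complex) \<Rightarrow> (real^'n \<Rightarrow> complex) \<Rightarrow> int \<Rightarrow> (real^'n \<Rightarrow> complex)" where
  "ldiv_slice m g f i =
     (if 0 \<le> i then (THE h. laurent h \<and> lmult h (lpow g (nat i)) = slice m f i)
      else lmult (slice m f i) (lpow g (nat (- i))))"

definition mut :: "(real^'n) \<times> real \<Rightarrow> (real^'n \<Rightarrow> complex) \<Rightarrow> (real^'n \<Rightarrow> complex) \<Rightarrow> (real^'n \<Rightarrow> complex)" where
  "mut m g f = (\<lambda>x. \<Sum>i\<in>{i::int. \<exists>y\<in>supp f. phi m y = real_of_int i}. ldiv_slice m g f i x)"

text \<open>P_(m,Q) = Newton polytope of mut^g_m f for (any) suitable f, g.\<close>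
definition P_mut :: "(real^'n) set \<Rightarrow> (real^'n) \<times> real \<Rightarrow> (real^'n) set \<Rightarrow> (real^'n) set" where
  "P_mut P m Q = (SOME R. \<exists>f g. normalized f \<and> normalized g \<and> newton f = P \<and> newton g = Q \<and>
                     mutable m g f \<and> R = newton (mut m g f))"

end

theory Submission
  imports Defs
begin

lemma lattice_add: "a \<in> lattice \<Longrightarrow> b \<in> lattice \<Longrightarrow> a + b \<in> lattice"
  by (auto simp: lattice_def)
lemma lattice_diff: "a \<in> lattice \<Longrightarrow> b \<in> lattice \<Longrightarrow> a - b \<in> lattice"
  by (auto simp: lattice_def)
lemma lattice_scale: "a \<in> lattice \<Longrightarrow> k \<in> \<int> \<Longrightarrow> k *\<^sub>R a \<in> lattice"
  by (auto simp: lattice_def)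
lemma lattice_inner: "a \<in> lattice \<Longrightarrow> b \<in> lattice \<Longrightarrow> a \<bullet> b \<in> \<int>"
  unfolding lattice_def inner_vec_def by (auto intro!: Ints_sum)

lemma supp_lmult: "supp (lmult a b) \<subseteq> {y + z | y z. y \<in> supp a \<and> z \<in> supp b}"
proof
  fix x assume "x \<in> supp (lmult a b)"
  then have "(\<Sum>y\<in>supp a. a y * b (x - y)) \<noteq> 0" by (simp add: supp_def lmult_def)
  then obtain y where "y \<in> supp a" "a y * b (x - y) \<noteq> 0" by (meson sum.neutral)
  moreover have "x = y + (x - y)" by simp
  ultimately show "x \<in> {y + z | y z. y \<in> supp a \<and> z \<in> supp b}"
    unfolding supp_def by (intro CollectI exI[of _ y] exI[of _ "x - y"]) auto
qed

lemma laurent_lmult: "laurent a \<Longrightarrow> laurent b \<Longrightarrow> laurent (lmult a b)"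
proof -
  assume a: "laurent a" and b: "laurent b"
  have "{y + z | y z. y \<in> supp a \<and> z \<in> supp b} = (\<lambda>(y,z). y + z) ` (supp a \<times> supp b)" by auto
  moreover have "finite (supp a \<times> supp b)" using a b by (simp add: laurent_def)
  ultimately have "finite {y + z | y z. y \<in> supp a \<and> z \<in> supp b}" by simp
  moreover have "{y + z | y z. y \<in> supp a \<and> z \<in> supp b} \<subseteq> lattice"
    using a b by (auto simp: laurent_def intro!: lattice_add)
  ultimately show ?thesis using supp_lmult[of a b] unfolding laurent_def
    by (meson finite_subset order_trans)
qed

lemma lmult_superset: "finite S \<Longrightarrow> supp a \<subseteq> S \<Longrightarrow> lmult a b x = (\<Sum>y\<in>S. a y * b (x - y))"
  unfolding lmult_def by (rule sum.mono_neutral_left) (auto simp: supp_def)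

lemma lmult_diff: assumes "laurent a1" "laurent a2"
  shows "lmult (\<lambda>x. a1 x - a2 x) b x = lmult a1 b x - lmult a2 b x"
proof -
  let ?S = "supp a1 \<union> supp a2"
  have f: "finite ?S" using assms by (simp add: laurent_def)
  have "supp (\<lambda>x. a1 x - a2 x) \<subseteq> ?S" by (auto simp: supp_def)
  then show ?thesis
    using lmult_superset[OF f, of "\<lambda>x. a1 x - a2 x"] lmult_superset[OF f, of a1] lmult_superset[OF f, of a2]
    by (simp add: left_diff_distrib sum_subtractf)
qed

lemma lmult_zero: "lmult (\<lambda>_. 0) b = (\<lambda>_. 0)"
  by (simp add: lmult_def supp_def)

lemma lmult_single:
  assumes "finite (supp a)" "a0 \<in> supp a" "\<And>y. y \<in> supp a \<Longrightarrow> b (a0 + b0 - y) \<noteq> 0 \<Longrightarrow> y = a0"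
  shows "lmult a b (a0 + b0) = a a0 * b b0"
proof -
  have "lmult a b (a0 + b0) = a a0 * b (a0 + b0 - a0)"
    unfolding lmult_def by (rule sum.remove[of _ a0, THEN trans]) (use assms in \<open>auto intro!: sum.neutral\<close>)
  then show ?thesis by simp
qed

lemma lpow_0: "lpow g 0 = (\<lambda>x. if x = 0 then 1 else 0)" by (simp add: lpow_def)
lemma lpow_Suc: "lpow g (Suc k) = lmult g (lpow g k)" by (simp add: lpow_def)
lemma laurent_lpow: "laurent g \<Longrightarrow> laurent (lpow g k)"
proof (induction k)
  case 0 then show ?case by (auto simp: lpow_0 laurent_def supp_def lattice_def)
next
  case (Suc k) then show ?case by (simp add: lpow_Suc laurent_lmult)
qed

lemma ex_min: fixes f :: "'a \<Rightarrow> real"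
  assumes "finite S" "S \<noteq> {}" shows "\<exists>x\<in>S. \<forall>y\<in>S. f x \<le> f y"
  using assms by (induction S rule: finite_ne_induct) (auto, metis order_trans linorder_le_cases)

lemma parallelogram: fixes v d :: "'a::real_inner"
  shows "norm (v + d) ^ 2 + norm (v - d) ^ 2 = 2 * norm v ^ 2 + 2 * norm d ^ 2"
  by (simp add: power2_norm_eq_inner inner_add_left inner_add_right inner_diff_left inner_diff_right inner_commute)

lemma leading:
  fixes a b :: "real^'n \<Rightarrow> complex" and c :: "real^'n"
  assumes "laurent a" "laurent b" "supp a \<noteq> {}" "supp b \<noteq> {}"
  shows "\<exists>a0\<in>supp a. \<exists>b0\<in>supp b. lmult a b (a0+b0) \<noteq> 0 \<and>
           (\<forall>x\<in>supp a. c \<bullet> a0 \<le> c \<bullet> x) \<and> (\<forall>y\<in>supp b. c \<bullet> b0 \<le> c \<bullet> y)"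
proof -
  define A' where "A' = {x\<in>supp a. \<forall>y\<in>supp a. c \<bullet> x \<le> c \<bullet> y}"
  define B' where "B' = {x\<in>supp b. \<forall>y\<in>supp b. c \<bullet> x \<le> c \<bullet> y}"
  have fa: "finite (supp a)" and fb: "finite (supp b)" using assms by (auto simp: laurent_def)
  have "A' \<noteq> {}" using ex_min[OF fa assms(3), of "\<lambda>x. c \<bullet> x"] by (auto simp: A'_def)
  moreover have "B' \<noteq> {}" using ex_min[OF fb assms(4), of "\<lambda>x. c \<bullet> x"] by (auto simp: B'_def)
  ultimately have ne: "A' \<times> B' \<noteq> {}" by simp
  have fin: "finite (A' \<times> B')" using fa fb by (auto simp: A'_def B'_def)
  obtain p where p: "p \<in> A' \<times> B'" and pmax: "\<forall>q\<in>A' \<times> B'. - (norm (fst q + snd q) ^ 2) \<ge> - (norm (fst p + snd p) ^ 2)"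
    using ex_min[OF fin ne, of "\<lambda>q. - (norm (fst q + snd q) ^ 2)"] by auto
  obtain a0 b0 where ab: "p = (a0, b0)" by (cases p)
  have a0: "a0 \<in> A'" and b0: "b0 \<in> B'" using p ab by auto
  have key: "y = a0" if y: "y \<in> supp a" and bz: "b (a0 + b0 - y) \<noteq> 0" for y
  proof -
    define z where "z = a0 + b0 - y"
    have z: "z \<in> supp b" using bz by (simp add: z_def supp_def)
    have "c \<bullet> y \<ge> c \<bullet> a0" "c \<bullet> z \<ge> c \<bullet> b0" using a0 b0 y z by (auto simp: A'_def B'_def)
    moreover have "c \<bullet> y + c \<bullet> z = c \<bullet> a0 + c \<bullet> b0" by (simp add: z_def inner_diff_right inner_add_right)
    ultimately have "c \<bullet> y = c \<bullet> a0" "c \<bullet> z = c \<bullet> b0" by linarith+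
    then have yA: "y \<in> A'" and zB: "z \<in> B'" using a0 b0 y z by (auto simp: A'_def B'_def)
    define d where "d = y - a0"
    define v where "v = a0 + b0"
    have h1: "norm (y + b0) ^ 2 \<le> norm v ^ 2" using pmax yA b0 ab by (force simp: v_def)
    have h2: "norm (a0 + z) ^ 2 \<le> norm v ^ 2" using pmax zB a0 ab by (force simp: v_def)
    have "y + b0 = v + d" "a0 + z = v - d" by (auto simp: v_def d_def z_def algebra_simps)
    with h1 h2 have "norm (v + d) ^ 2 \<le> norm v ^ 2" "norm (v - d) ^ 2 \<le> norm v ^ 2" by simp_all
    then have "norm d ^ 2 \<le> 0" using parallelogram[of v d] by linarith
    then show ?thesis by (simp add: d_def)
  qed
  have "lmult a b (a0 + b0) = a a0 * b b0"
    by (rule lmult_single[OF fa]) (use a0 key in \<open>auto simp: A'_def\<close>)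
  moreover have "a a0 \<noteq> 0" "b b0 \<noteq> 0" using a0 b0 by (auto simp: A'_def B'_def supp_def)
  ultimately show ?thesis using a0 b0 unfolding A'_def B'_def
    by (intro bexI[of _ a0] bexI[of _ b0]) auto
qed

lemma lmult_nonzero:
  assumes "laurent a" "laurent b" "supp a \<noteq> {}" "supp b \<noteq> {}"
  shows "supp (lmult a b) \<noteq> {}"
  using leading[OF assms, of 0] by (auto simp: supp_def)

lemma lmult_cancel:
  assumes "laurent h1" "laurent h2" "laurent k" "supp k \<noteq> {}" "lmult h1 k = lmult h2 k"
  shows "h1 = h2"
proof (rule ccontr)
  assume ne: "h1 \<noteq> h2"
  define d where "d = (\<lambda>x. h1 x - h2 x)"
  have sd: "supp d \<subseteq> supp h1 \<union> supp h2" by (auto simp: d_def supp_def)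
  have ld: "laurent d" using assms(1,2) sd unfolding laurent_def
    by (meson finite_UnI finite_subset le_sup_iff order_trans)
  have "supp d \<noteq> {}" using ne by (auto simp: d_def supp_def fun_eq_iff)
  then have "supp (lmult d k) \<noteq> {}" using lmult_nonzero[OF ld assms(3)] assms(4) by simp
  moreover have "lmult d k = (\<lambda>_. 0)"
    using lmult_diff[OF assms(1,2), of k] assms(5) unfolding d_def by auto
  ultimately show False by (simp add: supp_def)
qed

lemma lpow_min:
  fixes g :: "real^'n \<Rightarrow> complex"
  assumes "laurent g" "q0 \<in> supp g" "\<forall>y\<in>supp g. c \<bullet> q0 \<le> c \<bullet> y"
  shows "(\<forall>w\<in>supp (lpow g k). real k * (c \<bullet> q0) \<le> c \<bullet> w) \<and> (\<exists>w\<in>supp (lpow g k). c \<bullet> w = real k * (c \<bullet> q0))"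
proof (induction k)
  case 0
  then show ?case by (auto simp: lpow_0 supp_def)
next
  case (Suc k)
  have lk: "laurent (lpow g k)" by (rule laurent_lpow[OF assms(1)])
  have ne: "supp (lpow g k) \<noteq> {}" using Suc.IH by auto
  have "supp g \<noteq> {}" using assms(2) by auto
  from leading[OF assms(1) lk this ne, of c] obtain a0 b0 where
    ab: "a0 \<in> supp g" "b0 \<in> supp (lpow g k)" "lmult g (lpow g k) (a0+b0) \<noteq> 0"
      "\<forall>x\<in>supp g. c \<bullet> a0 \<le> c \<bullet> x" "\<forall>y\<in>supp (lpow g k). c \<bullet> b0 \<le> c \<bullet> y" by blast
  have "c \<bullet> a0 = c \<bullet> q0" using ab assms by force
  moreover have "c \<bullet> b0 = real k * (c \<bullet> q0)" using ab Suc.IH by force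
  ultimately have "c \<bullet> (a0 + b0) = real (Suc k) * (c \<bullet> q0)" by (simp add: inner_add_right algebra_simps)
  moreover have "a0 + b0 \<in> supp (lpow g (Suc k))" using ab(3) by (simp add: lpow_Suc supp_def)
  moreover have "\<forall>w\<in>supp (lpow g (Suc k)). real (Suc k) * (c \<bullet> q0) \<le> c \<bullet> w"
  proof
    fix w assume "w \<in> supp (lpow g (Suc k))"
    then obtain y z where "w = y + z" "y \<in> supp g" "z \<in> supp (lpow g k)"
      using supp_lmult[of g "lpow g k"] by (auto simp: lpow_Suc)
    then show "real (Suc k) * (c \<bullet> q0) \<le> c \<bullet> w"
      using assms(3) Suc.IH by (force simp: inner_add_right algebra_simps)
  qed
  ultimately show ?case by blast
qed

lemma S_monoid_hull:
  "S_monoid (convex hull V) = {h \<in> Mtilde. \<forall>v\<in>V. 0 \<le> fst h \<bullet> v + snd h}"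
proof (intro set_eqI iffI)
  fix h assume h: "h \<in> S_monoid (convex hull V)"
  show "h \<in> {h \<in> Mtilde. \<forall>v\<in>V. 0 \<le> fst h \<bullet> v + snd h}"
  proof (simp add: h[unfolded S_monoid_def, THEN CollectD, THEN conjunct1], intro ballI)
    fix v assume "v \<in> V"
    then have "(v, 1) \<in> cone_over (convex hull V)" unfolding cone_over_def
      by (meson hull_inc image_eqI)
    then have "0 \<le> h \<bullet> (v, 1)" using h by (auto simp: S_monoid_def)
    then show "0 \<le> fst h \<bullet> v + snd h" by (cases h) simp
  qed
next
  fix h assume h: "h \<in> {h \<in> Mtilde. \<forall>v\<in>V. 0 \<le> fst h \<bullet> v + snd h}"
  have "convex hull V \<subseteq> {v. - snd h \<le> fst h \<bullet> v}"
    by (rule hull_minimal) (use h in \<open>auto simp: convex_halfspace_ge\<close>)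
  then have "(\<lambda>v. (v, 1::real)) ` (convex hull V) \<subseteq> {w. 0 \<le> h \<bullet> w}"
    by (cases h) auto
  then have "cone_over (convex hull V) \<subseteq> {w. 0 \<le> h \<bullet> w}"
    unfolding cone_over_def by (rule hull_minimal) (rule convex_cone_halfspace_ge)
  then show "h \<in> S_monoid (convex hull V)" using h by (auto simp: S_monoid_def)
qed

lemma lpow_ker:
  assumes "supp g \<subseteq> {x. a \<bullet> x = 0}"
  shows "supp (lpow g k) \<subseteq> {x. a \<bullet> x = 0}"
proof (induction k)
  case 0 then show ?case by (auto simp: lpow_0 supp_def)
next
  case (Suc k)
  show ?case
  proof
    fix w assume "w \<in> supp (lpow g (Suc k))"
    then obtain y z where "w = y + z" "y \<in> supp g" "z \<in> supp (lpow g k)"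
      using supp_lmult[of g "lpow g k"] by (auto simp: lpow_Suc)
    then show "w \<in> {x. a \<bullet> x = 0}" using assms Suc.IH by (force simp: inner_add_right)
  qed
qed

lemma phi_add_ker: "fst m \<bullet> z = 0 \<Longrightarrow> phi m (y + z) = phi m y"
  by (simp add: phi_def inner_add_right)

lemma eta_hull:
  assumes "q0 \<in> V" "\<forall>y\<in>V. c \<bullet> q0 \<le> c \<bullet> y"
  shows "eta (convex hull V) c = - (c \<bullet> q0)"
proof -
  have "convex hull V \<subseteq> {v. c \<bullet> q0 \<le> c \<bullet> v}"
    by (rule hull_minimal) (use assms in \<open>auto simp: convex_halfspace_ge\<close>)
  then have "Inf ((\<lambda>v. v \<bullet> c) ` (convex hull V)) = q0 \<bullet> c"
  proof (intro cInf_eq_minimum)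
    show "q0 \<bullet> c \<in> (\<lambda>v. v \<bullet> c) ` (convex hull V)" using assms(1) by (intro imageI hull_inc)
  qed (use \<open>convex hull V \<subseteq> _\<close> in \<open>auto simp: inner_commute\<close>)
  then show ?thesis by (simp add: eta_def inner_commute)
qed

lemma main_equiv:
  fixes f g :: "real^'n \<Rightarrow> complex" and m :: "(real^'n) \<times> real" and c :: "real^'n"
  assumes lf: "laurent f" and lg: "laurent g" and mut: "mutable m g f" and mM: "m \<in> Mtilde"
    and gker: "supp g \<subseteq> {x. fst m \<bullet> x = 0}"
    and q0: "q0 \<in> supp g" "\<forall>y\<in>supp g. c \<bullet> q0 \<le> c \<bullet> y"
  shows "(\<forall>v\<in>supp f. 0 \<le> c \<bullet> v + s) \<longleftrightarrow>
         (\<forall>v\<in>supp (mut m g f). 0 \<le> c \<bullet> v + s + (c \<bullet> q0) * phi m v)"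
proof -
  define \<mu> where "\<mu> = c \<bullet> q0"
  define I where "I = {i::int. \<exists>y\<in>supp f. phi m y = real_of_int i}"
  define D where "D = ldiv_slice m g f"
  define fi where "fi = slice m f"
  have gne: "supp g \<noteq> {}" using q0 by auto
  have lpl: "laurent (lpow g k)" for k by (rule laurent_lpow[OF lg])
  have lpm: "\<forall>w\<in>supp (lpow g k). real k * \<mu> \<le> c \<bullet> w" "\<exists>w\<in>supp (lpow g k). c \<bullet> w = real k * \<mu>" for k
    using lpow_min[OF lg q0, of k] by (auto simp: \<mu>_def)
  have lpne: "supp (lpow g k) \<noteq> {}" for k using lpm(2)[of k] by auto
  have lpker: "supp (lpow g k) \<subseteq> {x. fst m \<bullet> x = 0}" for k by (rule lpow_ker[OF gker])
  have suppfi: "supp (fi i) = supp f \<inter> {x. phi m x = real_of_int i}" for i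
    by (auto simp: fi_def slice_def supp_def)
  have lfi: "laurent (fi i)" for i using lf unfolding laurent_def suppfi by auto
  have Dpos: "laurent (D i) \<and> lmult (D i) (lpow g (nat i)) = fi i" if "0 \<le> i" for i
  proof -
    obtain h where h: "laurent h" "lmult h (lpow g (nat i)) = slice m f (int (nat i))"
      using mut unfolding mutable_def by blast
    have eq: "int (nat i) = i" using that by simp
    have ex: "laurent h \<and> lmult h (lpow g (nat i)) = slice m f i" using h eq by simp
    have "laurent (THE h. laurent h \<and> lmult h (lpow g (nat i)) = slice m f i) \<and>
          lmult (THE h. laurent h \<and> lmult h (lpow g (nat i)) = slice m f i) (lpow g (nat i)) = slice m f i"
    proof (rule theI[of _ h])
      show "laurent h \<and> lmult h (lpow g (nat i)) = slice m f i" by (rule ex)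
      fix h' assume "laurent h' \<and> lmult h' (lpow g (nat i)) = slice m f i"
      then show "h' = h" using ex lmult_cancel[of h' h "lpow g (nat i)"] lpl lpne by auto
    qed
    then show ?thesis using that by (simp add: D_def ldiv_slice_def fi_def)
  qed
  have Dneg: "D i = lmult (fi i) (lpow g (nat (- i)))" if "i < 0" for i
    using that by (simp add: D_def ldiv_slice_def fi_def)
  have lD: "laurent (D i)" for i
    using Dpos[of i] Dneg[of i] laurent_lmult[OF lfi lpl] by (cases "0 \<le> i") auto
  have phiD: "phi m x = real_of_int i" if x: "x \<in> supp (D i)" for i x
  proof (cases "0 \<le> i")
    case True
    let ?k = "nat i"
    have dne: "supp (D i) \<noteq> {}" using x by auto
    have e: "lmult (D i) (lpow g ?k) = fi i" using Dpos True by blast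
    obtain a0 w0 where a: "a0 \<in> supp (D i)" "w0 \<in> supp (lpow g ?k)" "lmult (D i) (lpow g ?k) (a0 + w0) \<noteq> 0"
      "\<forall>x\<in>supp (D i). fst m \<bullet> a0 \<le> fst m \<bullet> x"
      using leading[OF lD lpl dne lpne, where c="fst m"] by blast
    obtain a1 w1 where b: "a1 \<in> supp (D i)" "w1 \<in> supp (lpow g ?k)" "lmult (D i) (lpow g ?k) (a1 + w1) \<noteq> 0"
      "\<forall>x\<in>supp (D i). (- fst m) \<bullet> a1 \<le> (- fst m) \<bullet> x"
      using leading[OF lD lpl dne lpne, where c="- fst m"] by blast
    have "a0 + w0 \<in> supp (fi i)" using a(3) e by (simp add: supp_def)
    then have "phi m (a0 + w0) = real_of_int i" unfolding suppfi by blast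
    moreover have "fst m \<bullet> w0 = 0" using a(2) lpker by auto
    ultimately have p0: "phi m a0 = real_of_int i" using phi_add_ker by metis
    have "a1 + w1 \<in> supp (fi i)" using b(3) e by (simp add: supp_def)
    then have "phi m (a1 + w1) = real_of_int i" unfolding suppfi by blast
    moreover have "fst m \<bullet> w1 = 0" using b(2) lpker by auto
    ultimately have p1: "phi m a1 = real_of_int i" using phi_add_ker by metis
    have "fst m \<bullet> a0 \<le> fst m \<bullet> x" "fst m \<bullet> x \<le> fst m \<bullet> a1" using a(4) b(4) x by auto
    then show ?thesis using p0 p1 by (simp add: phi_def)
  next
    case False
    then have "x \<in> supp (lmult (fi i) (lpow g (nat (- i))))" using x Dneg by simp
    then obtain y z where yz: "x = y + z" "y \<in> supp (fi i)" "z \<in> supp (lpow g (nat (-i)))"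
      using supp_lmult by blast
    have "phi m y = real_of_int i" using yz(2) unfolding suppfi by blast
    moreover have "fst m \<bullet> z = 0" using yz(3) lpker by blast
    ultimately show ?thesis using yz(1) phi_add_ker by metis
  qed
  have finI: "finite I"
  proof -
    have "I \<subseteq> (\<lambda>y. \<lfloor>phi m y\<rfloor>) ` supp f"
    proof
      fix i assume "i \<in> I"
      then obtain y where y: "y \<in> supp f" "phi m y = real_of_int i" unfolding I_def by blast
      then have "i = \<lfloor>phi m y\<rfloor>" by simp
      then show "i \<in> (\<lambda>y. \<lfloor>phi m y\<rfloor>) ` supp f" using y(1) by blast
    qed
    then show ?thesis using lf finite_surj unfolding laurent_def by blast
  qed
  have suppF: "supp (mut m g f) = (\<Union>i\<in>I. supp (D i))"
  proof (intro set_eqI iffI)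
    fix x assume "x \<in> supp (mut m g f)"
    then have "(\<Sum>i\<in>I. D i x) \<noteq> 0" by (simp add: supp_def mut_def I_def D_def)
    then obtain i where "i \<in> I" "D i x \<noteq> 0" by (meson sum.neutral)
    then show "x \<in> (\<Union>i\<in>I. supp (D i))" by (auto simp: supp_def)
  next
    fix x assume "x \<in> (\<Union>i\<in>I. supp (D i))"
    then obtain j where j: "j \<in> I" "x \<in> supp (D j)" by blast
    have "(\<Sum>i\<in>I. D i x) = D j x + (\<Sum>i\<in>I - {j}. D i x)" using finI j(1) by (simp add: sum.remove)
    also have "(\<Sum>i\<in>I - {j}. D i x) = 0"
    proof (rule sum.neutral, intro ballI)
      fix i assume "i \<in> I - {j}"
      then show "D i x = 0" using phiD[of x j] phiD[of x i] j(2) by (auto simp: supp_def)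
    qed
    finally show "x \<in> supp (mut m g f)" using j(2) by (simp add: supp_def mut_def I_def D_def)
  qed
  have suppf: "supp f = (\<Union>i\<in>I. supp (fi i))"
  proof (intro set_eqI iffI)
    fix x assume x: "x \<in> supp f"
    have "fst m \<in> lattice" "snd m \<in> \<int>" using mM by (auto simp: Mtilde_def)
    moreover have "x \<in> lattice" using x lf by (auto simp: laurent_def)
    ultimately have "phi m x \<in> \<int>" unfolding phi_def by (metis Ints_add lattice_inner)
    then obtain i where "phi m x = real_of_int i" by (auto elim: Ints_cases)
    then show "x \<in> (\<Union>i\<in>I. supp (fi i))" using x by (auto simp: I_def suppfi)
  qed (auto simp: suppfi)
  have per: "(\<forall>v\<in>supp (fi i). 0 \<le> c \<bullet> v + s) \<longleftrightarrow> (\<forall>v\<in>supp (D i). 0 \<le> c \<bullet> v + s + \<mu> * real_of_int i)" for i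
  proof (cases "0 \<le> i")
    case True
    define k where "k = nat i"
    have ki: "real k = real_of_int i" using True by (simp add: k_def)
    have e: "lmult (D i) (lpow g k) = fi i" using Dpos True by (simp add: k_def)
    show ?thesis
    proof
      assume H: "\<forall>v\<in>supp (fi i). 0 \<le> c \<bullet> v + s"
      show "\<forall>v\<in>supp (D i). 0 \<le> c \<bullet> v + s + \<mu> * real_of_int i"
      proof
        fix a assume a: "a \<in> supp (D i)"
        then have dne: "supp (D i) \<noteq> {}" by auto
        obtain a0 w0 where aw: "a0 \<in> supp (D i)" "w0 \<in> supp (lpow g k)" "lmult (D i) (lpow g k) (a0 + w0) \<noteq> 0"
          "\<forall>x\<in>supp (D i). c \<bullet> a0 \<le> c \<bullet> x" "\<forall>y\<in>supp (lpow g k). c \<bullet> w0 \<le> c \<bullet> y"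
          using leading[OF lD lpl dne lpne, where c=c] by blast
        obtain w1 where w1: "w1 \<in> supp (lpow g k)" "c \<bullet> w1 = real k * \<mu>" using lpm(2)[of k] by blast
        have "c \<bullet> w0 \<le> real k * \<mu>" using aw(5) w1 by metis
        moreover have "a0 + w0 \<in> supp (fi i)" using aw(3) e by (simp add: supp_def)
        then have "0 \<le> c \<bullet> (a0 + w0) + s" using H by blast
        moreover have "c \<bullet> a0 \<le> c \<bullet> a" using aw(4) a by blast
        ultimately show "0 \<le> c \<bullet> a + s + \<mu> * real_of_int i" using ki by (simp add: inner_add_right algebra_simps)
      qed
    next
      assume H: "\<forall>v\<in>supp (D i). 0 \<le> c \<bullet> v + s + \<mu> * real_of_int i"
      show "\<forall>v\<in>supp (fi i). 0 \<le> c \<bullet> v + s"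
      proof
        fix v assume "v \<in> supp (fi i)"
        then have "v \<in> supp (lmult (D i) (lpow g k))" using e by simp
        then obtain y z where yz: "v = y + z" "y \<in> supp (D i)" "z \<in> supp (lpow g k)"
          using supp_lmult by blast
        have "real k * \<mu> \<le> c \<bullet> z" using lpm(1) yz(3) by blast
        moreover have "0 \<le> c \<bullet> y + s + \<mu> * real_of_int i" using H yz(2) by blast
        ultimately show "0 \<le> c \<bullet> v + s" using yz(1) ki by (simp add: inner_add_right algebra_simps)
      qed
    qed
  next
    case False
    define k where "k = nat (- i)"
    have ki: "real k = - real_of_int i" using False by (simp add: k_def)
    have e: "D i = lmult (fi i) (lpow g k)" using Dneg False by (simp add: k_def)
    show ?thesis
    proof
      assume H: "\<forall>v\<in>supp (fi i). 0 \<le> c \<bullet> v + s"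
      show "\<forall>v\<in>supp (D i). 0 \<le> c \<bullet> v + s + \<mu> * real_of_int i"
      proof
        fix v assume "v \<in> supp (D i)"
        then have "v \<in> supp (lmult (fi i) (lpow g k))" using e by simp
        then obtain y z where yz: "v = y + z" "y \<in> supp (fi i)" "z \<in> supp (lpow g k)"
          using supp_lmult by blast
        have "real k * \<mu> \<le> c \<bullet> z" using lpm(1) yz(3) by blast
        moreover have "0 \<le> c \<bullet> y + s" using H yz(2) by blast
        ultimately show "0 \<le> c \<bullet> v + s + \<mu> * real_of_int i" using yz(1) ki by (simp add: inner_add_right algebra_simps)
      qed
    next
      assume H: "\<forall>v\<in>supp (D i). 0 \<le> c \<bullet> v + s + \<mu> * real_of_int i"
      show "\<forall>v\<in>supp (fi i). 0 \<le> c \<bullet> v + s"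
      proof
        fix a assume a: "a \<in> supp (fi i)"
        then have dne: "supp (fi i) \<noteq> {}" by auto
        obtain a0 w0 where aw: "a0 \<in> supp (fi i)" "w0 \<in> supp (lpow g k)" "lmult (fi i) (lpow g k) (a0 + w0) \<noteq> 0"
          "\<forall>x\<in>supp (fi i). c \<bullet> a0 \<le> c \<bullet> x" "\<forall>y\<in>supp (lpow g k). c \<bullet> w0 \<le> c \<bullet> y"
          using leading[OF lfi lpl dne lpne, where c=c] by blast
        obtain w1 where w1: "w1 \<in> supp (lpow g k)" "c \<bullet> w1 = real k * \<mu>" using lpm(2)[of k] by blast
        have "c \<bullet> w0 \<le> real k * \<mu>" using aw(5) w1 by metis
        moreover have "a0 + w0 \<in> supp (D i)" using aw(3) e by (simp add: supp_def)
        then have "0 \<le> c \<bullet> (a0 + w0) + s + \<mu> * real_of_int i" using H by blast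
        moreover have "c \<bullet> a0 \<le> c \<bullet> a" using aw(4) a by blast
        ultimately show "0 \<le> c \<bullet> a + s" using ki by (simp add: inner_add_right algebra_simps)
      qed
    qed
  qed
  have "(\<forall>v\<in>supp f. 0 \<le> c \<bullet> v + s) \<longleftrightarrow> (\<forall>i\<in>I. \<forall>v\<in>supp (fi i). 0 \<le> c \<bullet> v + s)"
    unfolding suppf by blast
  also have "\<dots> \<longleftrightarrow> (\<forall>i\<in>I. \<forall>v\<in>supp (D i). 0 \<le> c \<bullet> v + s + \<mu> * real_of_int i)"
    using per by blast
  also have "\<dots> \<longleftrightarrow> (\<forall>i\<in>I. \<forall>v\<in>supp (D i). 0 \<le> c \<bullet> v + s + \<mu> * phi m v)"
    using phiD by auto
  also have "\<dots> \<longleftrightarrow> (\<forall>v\<in>supp (mut m g f). 0 \<le> c \<bullet> v + s + (c \<bullet> q0) * phi m v)"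
    unfolding suppF \<mu>_def by blast
  finally show ?thesis .
qed

lemma ext_comb:
  assumes "x extreme_point_of S" "a \<in> S" "b \<in> S" "0 < u" "u < 1" "x = (1 - u) *\<^sub>R a + u *\<^sub>R b"
  shows "a = b"
  using assms unfolding extreme_point_of_def in_segment by blast

lemma ext_mid:
  assumes "x extreme_point_of S" "a \<in> S" "b \<in> S" "a + b = 2 *\<^sub>R x"
  shows "a = x"
proof -
  have "x = (1 - 1/2) *\<^sub>R a + (1/2) *\<^sub>R b" using assms(4)
    by (simp add: scaleR_add_right[symmetric] algebra_simps)
  then have "a = b" using ext_comb[OF assms(1-3), of "1/2"] by simp
  then show ?thesis using assms(4) by (metis scaleR_2 scaleR_left_imp_eq zero_neq_numeral)
qed

lemma supp_lpow_sub:
  assumes "convex Q" "supp g \<subseteq> Q" "Q \<noteq> {}"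
  shows "supp (lpow g k) \<subseteq> (\<lambda>x. real k *\<^sub>R x) ` Q"
proof (induction k)
  case 0
  then show ?case using assms(3) by (auto simp: lpow_0 supp_def)
next
  case (Suc k)
  show ?case
  proof
    fix w assume "w \<in> supp (lpow g (Suc k))"
    then obtain y z where yz: "w = y + z" "y \<in> supp g" "z \<in> supp (lpow g k)"
      using supp_lmult[of g "lpow g k"] by (auto simp: lpow_Suc)
    then obtain q where q: "q \<in> Q" "z = real k *\<^sub>R q" using Suc.IH by blast
    have yQ: "y \<in> Q" using yz(2) assms(2) by blast
    define p where "p = (1 / real (Suc k)) *\<^sub>R y + (real k / real (Suc k)) *\<^sub>R q"
    have "p \<in> Q" unfolding p_def using assms(1) yQ q(1)
      by (rule convexD) (auto simp: field_simps)
    moreover have "w = real (Suc k) *\<^sub>R p" unfolding p_def yz(1) q(2)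
      by (simp add: scaleR_add_right)
    ultimately show "w \<in> (\<lambda>x. real (Suc k) *\<^sub>R x) ` Q" by blast
  qed
qed

lemma lpow_ext:
  assumes lg: "laurent g" and cQ: "convex Q" and gQ: "supp g \<subseteq> Q" and ne: "Q \<noteq> {}"
    and q: "q extreme_point_of Q" and gq: "g q = 1"
  shows "lpow g k (real k *\<^sub>R q) = 1"
proof (induction k)
  case 0 then show ?case by (simp add: lpow_0)
next
  case (Suc k)
  have fg: "finite (supp g)" using lg by (simp add: laurent_def)
  have qs: "q \<in> supp g" using gq by (simp add: supp_def)
  have "lmult g (lpow g k) (q + real k *\<^sub>R q) = g q * lpow g k (real k *\<^sub>R q)"
  proof (rule lmult_single[OF fg qs])
    fix y assume y: "y \<in> supp g" and nz: "lpow g k (q + real k *\<^sub>R q - y) \<noteq> 0"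
    then have "q + real k *\<^sub>R q - y \<in> supp (lpow g k)" by (simp add: supp_def)
    then obtain q' where q': "q' \<in> Q" "q + real k *\<^sub>R q - y = real k *\<^sub>R q'"
      using supp_lpow_sub[OF cQ gQ ne, of k] by blast
    have yQ: "y \<in> Q" using y gQ by blast
    show "y = q"
    proof (cases "k = 0")
      case True then show ?thesis using q' by simp
    next
      case False
      define u where "u = real k / real (Suc k)"
      have u: "0 < u" "u < 1" using False by (auto simp: u_def)
      have "real (Suc k) *\<^sub>R q = y + real k *\<^sub>R q'" using q'(2)
        by (simp add: algebra_simps)
      have u1: "1 - u = 1 / real (Suc k)" by (simp add: u_def field_simps)
      have "q = (1 / real (Suc k)) *\<^sub>R (real (Suc k) *\<^sub>R q)" by simp
      also have "\<dots> = (1 / real (Suc k)) *\<^sub>R (y + real k *\<^sub>R q')" using \<open>real (Suc k) *\<^sub>R q = _\<close> by simp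
      also have "\<dots> = (1 - u) *\<^sub>R y + u *\<^sub>R q'" unfolding u1 by (simp add: u_def scaleR_add_right)
      finally have qc: "q = (1 - u) *\<^sub>R y + u *\<^sub>R q'" .
      then have "y = q'" using ext_comb[OF q yQ q'(1) u] by blast
      then show ?thesis using qc by (simp add: algebra_simps)
    qed
  qed
  then show ?case using Suc.IH gq by (simp add: lpow_Suc algebra_simps)
qed

lemma existence:
  fixes P Q :: "(real^'n) set" and m :: "(real^'n) \<times> real"
  assumes lP: "lattice_polytope P" and dp: "deformation_pair P m Q"
  shows "\<exists>f g. normalized f \<and> normalized g \<and> newton f = P \<and> newton g = Q \<and> mutable m g f"
proof -
  have mM: "m \<in> Mtilde" and lQ: "lattice_polytope Q" and Qker: "Q \<subseteq> {x. fst m \<bullet> x = 0}"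
    and dsl: "\<And>i::nat. P \<inter> {x. phi m x = real i} \<noteq> {} \<Longrightarrow> (\<exists>R. polytope R \<and>
             P \<inter> {x. phi m x = real i} = minkowski_sum ((\<lambda>x. real i *\<^sub>R x) ` Q) R)"
    using dp unfolding deformation_pair_def by blast+
  obtain VQ where VQ: "finite VQ" "VQ \<noteq> {}" "VQ \<subseteq> lattice" "Q = convex hull VQ"
    using lQ unfolding lattice_polytope_def by blast
  obtain VP where VP: "finite VP" "VP \<noteq> {}" "VP \<subseteq> lattice" "P = convex hull VP"
    using lP unfolding lattice_polytope_def by blast
  define g where "g = (\<lambda>x. if x \<in> VQ then (1::complex) else 0)"
  have suppg: "supp g = VQ" by (auto simp: g_def supp_def)
  have lg: "laurent g" using VQ by (simp add: laurent_def suppg)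
  have ng: "newton g = Q" using VQ by (simp add: newton_def suppg)
  have cQ: "convex Q" using VQ by simp
  have Qne: "Q \<noteq> {}" using VQ by simp
  have gQ: "supp g \<subseteq> Q" using VQ by (simp add: suppg hull_subset)
  have gker: "supp g \<subseteq> {x. fst m \<bullet> x = 0}" using gQ Qker by blast
  have extQ: "q \<in> VQ" if "q extreme_point_of Q" for q
    using that VQ(4) extreme_point_of_convex_hull by blast
  have normg: "normalized g" unfolding normalized_def using lg ng extQ by (simp add: g_def)
  have cP: "convex P" and kP: "compact P" using VP by (auto simp: finite_imp_compact_convex_hull)
  define E where "E = {x. x extreme_point_of P}"
  have PE: "P = convex hull E" unfolding E_def by (rule Krein_Milman_Minkowski[OF kP cP])
  have EVP: "E \<subseteq> VP" unfolding E_def using VP(4) extreme_point_of_convex_hull by blast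
  have finE: "finite E" using EVP VP(1) finite_subset by blast
  have Elat: "E \<subseteq> lattice" using EVP VP(3) by blast
  have EP: "E \<subseteq> P" unfolding E_def extreme_point_of_def by blast
  have fmL: "fst m \<in> lattice" and smZ: "snd m \<in> \<int>" using mM by (auto simp: Mtilde_def)
  have phiInt: "phi m x \<in> \<int>" if "x \<in> lattice" for x
    unfolding phi_def using lattice_inner[OF fmL that] smZ by (metis Ints_add)
  define ht where "ht x = \<lfloor>phi m x\<rfloor>" for x
  have htE: "phi m e = real_of_int (ht e)" if "e \<in> E" for e
    using phiInt[of e] that Elat unfolding ht_def by (metis Ints_cases floor_of_int subsetD)
  define A where "A i = (if 0 \<le> i then (SOME R. polytope R \<and> P \<inter> {x. phi m x = real (nat i)} =
        minkowski_sum ((\<lambda>x. real (nat i) *\<^sub>R x) ` Q) R) else P)" for i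
  have PAB: "(\<exists>q\<in>Q. \<exists>r\<in>A (ht e). e = real (nat (ht e)) *\<^sub>R q + r) \<and>
             (\<forall>r\<in>A (ht e). \<forall>q\<in>Q. real (nat (ht e)) *\<^sub>R q + r \<in> P)" if e: "e \<in> E" for e
  proof (cases "0 \<le> ht e")
    case True
    let ?k = "nat (ht e)"
    have "real ?k = phi m e" using True htE[OF e] by simp
    then have eS: "e \<in> P \<inter> {x. phi m x = real ?k}" using e EP by auto
    then have "\<exists>R. polytope R \<and> P \<inter> {x. phi m x = real ?k} = minkowski_sum ((\<lambda>x. real ?k *\<^sub>R x) ` Q) R"
      using dsl by blast
    then have R: "polytope (A (ht e)) \<and> P \<inter> {x. phi m x = real ?k} = minkowski_sum ((\<lambda>x. real ?k *\<^sub>R x) ` Q) (A (ht e))"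
      unfolding A_def using True by (simp only: if_True) (rule someI_ex)
    have "e \<in> minkowski_sum ((\<lambda>x. real ?k *\<^sub>R x) ` Q) (A (ht e))" using R eS by blast
    then obtain a r where ar: "e = a + r" "a \<in> (\<lambda>x. real ?k *\<^sub>R x) ` Q" "r \<in> A (ht e)"
      unfolding minkowski_sum_def by blast
    then obtain q where "q \<in> Q" "a = real ?k *\<^sub>R q" by blast
    then have 1: "\<exists>q\<in>Q. \<exists>r\<in>A (ht e). e = real ?k *\<^sub>R q + r" using ar by blast
    have 2: "\<forall>r\<in>A (ht e). \<forall>q\<in>Q. real ?k *\<^sub>R q + r \<in> P"
    proof (intro ballI)
      fix r q assume "r \<in> A (ht e)" "q \<in> Q"
      then have "real ?k *\<^sub>R q + r \<in> minkowski_sum ((\<lambda>x. real ?k *\<^sub>R x) ` Q) (A (ht e))"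
        unfolding minkowski_sum_def by blast
      then show "real ?k *\<^sub>R q + r \<in> P" using R by blast
    qed
    show ?thesis using 1 2 by blast
  next
    case False
    then have "A (ht e) = P" "nat (ht e) = 0" by (auto simp: A_def)
    then show ?thesis using e EP Qne by auto
  qed
  define qe where "qe e = (SOME q. q \<in> Q \<and> (\<exists>r\<in>A (ht e). e = real (nat (ht e)) *\<^sub>R q + r))" for e
  define re where "re e = e - real (nat (ht e)) *\<^sub>R qe e" for e
  have qre: "qe e \<in> Q \<and> re e \<in> A (ht e) \<and> e = real (nat (ht e)) *\<^sub>R qe e + re e" if e: "e \<in> E" for e
  proof -
    have "qe e \<in> Q \<and> (\<exists>r\<in>A (ht e). e = real (nat (ht e)) *\<^sub>R qe e + r)"
      unfolding qe_def by (rule someI_ex) (use PAB[OF e] in blast)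
    then obtain r where "qe e \<in> Q" "r \<in> A (ht e)" "e = real (nat (ht e)) *\<^sub>R qe e + r" by blast
    moreover then have "r = e - real (nat (ht e)) *\<^sub>R qe e" by (simp add: algebra_simps)
    ultimately show ?thesis unfolding re_def by simp
  qed
  have PB: "real (nat (ht e)) *\<^sub>R q + r \<in> P" if "e \<in> E" "r \<in> A (ht e)" "q \<in> Q" for e r q
    using PAB that by blast
  have qext: "qe e extreme_point_of Q" if e: "e \<in> E" and k: "0 < nat (ht e)" for e
  proof -
    let ?k = "real (nat (ht e))"
    have "\<not> qe e \<in> open_segment a b" if ab: "a \<in> Q" "b \<in> Q" for a b
    proof
      assume "qe e \<in> open_segment a b"
      then obtain u where u: "a \<noteq> b" "0 < u" "u < 1" "qe e = (1 - u) *\<^sub>R a + u *\<^sub>R b"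
        unfolding in_segment by blast
      have "e = (1 - u) *\<^sub>R (?k *\<^sub>R a + re e) + u *\<^sub>R (?k *\<^sub>R b + re e)"
        using qre[OF e] u(4) by (simp add: algebra_simps)
      moreover have "?k *\<^sub>R a + re e \<in> P" "?k *\<^sub>R b + re e \<in> P" using PB[OF e] qre[OF e] ab by auto
      moreover have "?k *\<^sub>R a + re e \<noteq> ?k *\<^sub>R b + re e" using u(1) k by simp
      ultimately show False using e u(2,3) unfolding E_def extreme_point_of_def in_segment by blast
    qed
    then show ?thesis using qre[OF e] unfolding extreme_point_of_def by blast
  qed
  have relat: "re e \<in> lattice" if e: "e \<in> E" for e
  proof (cases "nat (ht e) = 0")
    case True then show ?thesis using e Elat by (auto simp: re_def)
  next
    case False
    then have "qe e \<in> lattice" using qext[OF e] extQ VQ(3) by auto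
    then show ?thesis unfolding re_def using e Elat by (intro lattice_diff lattice_scale) auto
  qed
  have phire: "phi m (re e) = real_of_int (ht e)" if e: "e \<in> E" for e
  proof -
    have "fst m \<bullet> (real (nat (ht e)) *\<^sub>R qe e) = 0" using qre[OF e] Qker by auto
    then have "phi m (re e + real (nat (ht e)) *\<^sub>R qe e) = phi m (re e)" by (rule phi_add_ker)
    then show ?thesis using htE[OF e] qre[OF e] by (simp add: add.commute)
  qed
  define Hts where "Hts = ht ` E"
  define H where "H i = (\<lambda>x. if x \<in> re ` {e\<in>E. ht e = i} then (1::complex) else 0)" for i
  define T where "T i = lmult (H i) (lpow g (nat i))" for i
  define F where "F = (\<lambda>x. \<Sum>i\<in>Hts. T i x)"
  have suppH: "supp (H i) = re ` {e\<in>E. ht e = i}" for i by (auto simp: H_def supp_def)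
  have lH: "laurent (H i)" for i unfolding laurent_def suppH using finE relat by auto
  have lT: "laurent (T i)" for i unfolding T_def by (rule laurent_lmult[OF lH laurent_lpow[OF lg]])
  have suppT: "supp (T i) \<subseteq> P \<inter> {x. phi m x = real_of_int i}" for i
  proof
    fix x assume "x \<in> supp (T i)"
    then obtain y z where yz: "x = y + z" "y \<in> supp (H i)" "z \<in> supp (lpow g (nat i))"
      using supp_lmult unfolding T_def by blast
    obtain e where e: "e \<in> E" "ht e = i" "y = re e" using yz(2) suppH by auto
    obtain q where q: "q \<in> Q" "z = real (nat i) *\<^sub>R q" using yz(3) supp_lpow_sub[OF cQ gQ Qne] by blast
    have "x \<in> P" using PB[OF e(1) _ q(1), of "re e"] qre[OF e(1)] e yz(1) q(2) by (simp add: add.commute)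
    moreover have "fst m \<bullet> z = 0" using yz(3) lpow_ker[OF gker] by blast
    then have "phi m x = real_of_int i" using yz(1) e phire phi_add_ker by metis
    ultimately show "x \<in> P \<inter> {x. phi m x = real_of_int i}" by blast
  qed
  have finH: "finite Hts" using finE by (simp add: Hts_def)
  have Fval: "F x = (if j \<in> Hts then T j x else 0)" if "phi m x = real_of_int j" for x j
  proof -
    have z: "T i x = 0" if "i \<noteq> j" for i
      using suppT[of i] that \<open>phi m x = _\<close> by (auto simp: supp_def)
    show ?thesis
    proof (cases "j \<in> Hts")
      case True
      then have "F x = T j x + (\<Sum>i\<in>Hts - {j}. T i x)" unfolding F_def using finH by (simp add: sum.remove)
      also have "(\<Sum>i\<in>Hts - {j}. T i x) = 0" using z by (intro sum.neutral) blast
      finally show ?thesis using True by simp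
    next
      case False
      have "(\<Sum>i\<in>Hts. T i x) = 0" using z False by (intro sum.neutral) metis
      then show ?thesis unfolding F_def using False by simp
    qed
  qed
  have Fzero: "F x = 0" if "x \<notin> P" for x
  proof -
    have "T i x = 0" for i
    proof (rule ccontr)
      assume "T i x \<noteq> 0"
      then have "x \<in> supp (T i)" by (simp add: supp_def)
      then show False using suppT[of i] that by blast
    qed
    then show ?thesis unfolding F_def by simp
  qed
  have FE: "F e = 1" if e: "e \<in> E" for e
  proof -
    let ?j = "ht e" let ?k = "nat (ht e)"
    have F1: "F e = T ?j e" using Fval[OF htE[OF e]] e by (simp add: Hts_def)
    have fH: "finite (supp (H ?j))" using lH by (simp add: laurent_def)
    have rs: "re e \<in> supp (H ?j)" using e suppH by auto
    have ee: "e = re e + real ?k *\<^sub>R qe e" using qre[OF e] by (simp add: add.commute)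
    have "lmult (H ?j) (lpow g ?k) (re e + real ?k *\<^sub>R qe e) = H ?j (re e) * lpow g ?k (real ?k *\<^sub>R qe e)"
    proof (rule lmult_single[OF fH rs])
      fix y assume y: "y \<in> supp (H ?j)" and nz: "lpow g ?k (re e + real ?k *\<^sub>R qe e - y) \<noteq> 0"
      obtain e' where e': "e' \<in> E" "ht e' = ?j" "y = re e'" using y suppH by auto
      have "re e + real ?k *\<^sub>R qe e - y \<in> supp (lpow g ?k)" using nz by (simp add: supp_def)
      then obtain q' where q': "q' \<in> Q" "re e + real ?k *\<^sub>R qe e - y = real ?k *\<^sub>R q'"
        using supp_lpow_sub[OF cQ gQ Qne] by blast
      have a: "real ?k *\<^sub>R qe e + y \<in> P" using PB[OF e'(1), of y "qe e"] qre[OF e] qre[OF e'(1)] e' by simp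
      have b: "real ?k *\<^sub>R q' + re e \<in> P" using PB[OF e, of "re e" q'] qre[OF e] q' by simp
      have "(real ?k *\<^sub>R qe e + y) + (real ?k *\<^sub>R q' + re e) = 2 *\<^sub>R e"
      proof -
        have kq: "real ?k *\<^sub>R q' = e - y" using q'(2) ee[symmetric] by simp
        have "(real ?k *\<^sub>R qe e + y) + (real ?k *\<^sub>R q' + re e) = (re e + real ?k *\<^sub>R qe e) + e"
          unfolding kq by (simp add: algebra_simps)
        also have "\<dots> = 2 *\<^sub>R e" unfolding ee[symmetric] by (simp add: scaleR_2)
        finally show ?thesis .
      qed
      then have "real ?k *\<^sub>R qe e + y = e" using ext_mid[of e P] e a b unfolding E_def by blast
      then show "y = re e" using ee by (metis add.commute add_left_cancel)
    qed
    moreover have "H ?j (re e) = 1" using e by (auto simp: H_def)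
    moreover have "lpow g ?k (real ?k *\<^sub>R qe e) = 1"
    proof (cases "?k = 0")
      case True then show ?thesis by (simp add: lpow_0)
    next
      case False
      have qx: "qe e extreme_point_of Q" using qext[OF e] False by simp
      have "g (qe e) = 1" using extQ[OF qx] by (simp add: g_def)
      then show ?thesis using lpow_ext[OF lg cQ gQ Qne qx] by blast
    qed
    ultimately show ?thesis using F1 ee by (simp add: T_def)
  qed
  have sFP: "supp F \<subseteq> P" using Fzero by (auto simp: supp_def)
  have EsF: "E \<subseteq> supp F" using FE by (auto simp: supp_def)
  have nF: "newton F = P"
  proof
    show "newton F \<subseteq> P" unfolding newton_def using sFP cP by (simp add: hull_minimal)
    show "P \<subseteq> newton F" unfolding newton_def PE using EsF by (rule hull_mono)
  qed
  have lF: "laurent F"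
  proof -
    have "supp F \<subseteq> (\<Union>i\<in>Hts. supp (T i))"
    proof
      fix x assume "x \<in> supp F"
      then have "(\<Sum>i\<in>Hts. T i x) \<noteq> 0" by (simp add: F_def supp_def)
      then obtain i where "i \<in> Hts" "T i x \<noteq> 0" by (meson sum.neutral)
      then show "x \<in> (\<Union>i\<in>Hts. supp (T i))" by (auto simp: supp_def)
    qed
    moreover have "finite (\<Union>i\<in>Hts. supp (T i))" "(\<Union>i\<in>Hts. supp (T i)) \<subseteq> lattice"
      using finH lT by (auto simp: laurent_def)
    ultimately show ?thesis unfolding laurent_def by (meson finite_subset order_trans)
  qed
  have normF: "normalized F"
    unfolding normalized_def using lF nF FE by (simp add: E_def)
  have mutF: "mutable m g F"
    unfolding mutable_def
  proof (intro conjI lF allI)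
    fix i :: nat
    show "\<exists>h. laurent h \<and> lmult h (lpow g i) = slice m F (int i)"
    proof (cases "int i \<in> Hts")
      case True
      have "lmult (H (int i)) (lpow g i) = slice m F (int i)"
      proof
        fix x
        show "lmult (H (int i)) (lpow g i) x = slice m F (int i) x"
        proof (cases "phi m x = real_of_int (int i)")
          case True
          then show ?thesis using Fval[OF True] \<open>int i \<in> Hts\<close> by (simp add: slice_def T_def)
        next
          case False
          then have "T (int i) x = 0" using suppT[of "int i"] by (auto simp: supp_def)
          then show ?thesis using False by (simp add: slice_def T_def)
        qed
      qed
      then show ?thesis using lH by blast
    next
      case False
      have z0: "(\<lambda>_. 0) = slice m F (int i)"
      proof
        fix x show "0 = slice m F (int i) x"
          using Fval[of x "int i"] False by (simp add: slice_def)
      qed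
      have "lmult (\<lambda>_. 0) (lpow g i) = slice m F (int i)" unfolding lmult_zero by (rule z0)
      moreover have "laurent (\<lambda>_::real^'n. 0::complex)" by (simp add: laurent_def supp_def)
      ultimately show ?thesis by blast
    qed
  qed
  show ?thesis using normF normg nF ng mutF by blast
qed

theorem lemma2p10:
  fixes P Q :: "(real^'n) set" and m :: "(real^'n) \<times> real"
  assumes "lattice_polytope P" and "deformation_pair P m Q"
  shows "bij_betw (xi m Q) (S_monoid P) (S_monoid (P_mut P m Q)) \<and>
         (\<forall>h \<in> S_monoid P. xi (- m) Q (xi m Q h) = h) \<and>
         (\<forall>h \<in> S_monoid (P_mut P m Q). xi m Q (xi (- m) Q h) = h)"
proof -
  obtain f0 g0 where h0: "normalized f0 \<and> normalized g0 \<and> newton f0 = P \<and> newton g0 = Q \<and> mutable m g0 f0"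
    using existence[OF assms] by blast
  have "\<exists>R. \<exists>f g. normalized f \<and> normalized g \<and> newton f = P \<and> newton g = Q \<and>
                     mutable m g f \<and> R = newton (mut m g f)"
    by (rule exI[of _ "newton (mut m g0 f0)"], rule exI[of _ f0], rule exI[of _ g0]) (use h0 in simp)
  then have "\<exists>f g. normalized f \<and> normalized g \<and> newton f = P \<and> newton g = Q \<and>
                     mutable m g f \<and> P_mut P m Q = newton (mut m g f)"
    unfolding P_mut_def by (rule someI_ex)
  then obtain f g where nf: "normalized f" and ng: "normalized g" and Pf: "newton f = P"
    and Qg: "newton g = Q" and mut: "mutable m g f" and Pm: "P_mut P m Q = newton (mut m g f)"
    by blast
  have mM: "m \<in> Mtilde" and lQ: "lattice_polytope Q" and Qker: "Q \<subseteq> {x. fst m \<bullet> x = 0}"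
    using assms(2) unfolding deformation_pair_def by blast+
  have lf: "laurent f" and lg: "laurent g" using nf ng by (auto simp: normalized_def)
  have Qne: "Q \<noteq> {}" using lQ unfolding lattice_polytope_def by auto
  have fing: "finite (supp g)" and glat: "supp g \<subseteq> lattice" using lg by (auto simp: laurent_def)
  have QH: "Q = convex hull (supp g)" using Qg by (simp add: newton_def)
  have gne: "supp g \<noteq> {}"
  proof
    assume "supp g = {}"
    then have "Q = {}" unfolding QH by simp
    then show False using Qne by blast
  qed
  have gQ: "supp g \<subseteq> Q" unfolding QH by (rule hull_subset)
  have gker: "supp g \<subseteq> {x. fst m \<bullet> x = 0}" using Qker gQ by (rule order_trans[rotated])
  define F where "F = mut m g f"
  have SP: "S_monoid P = {h \<in> Mtilde. \<forall>v\<in>supp f. 0 \<le> fst h \<bullet> v + snd h}"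
    using S_monoid_hull[of "supp f"] Pf by (simp add: newton_def)
  have SP': "S_monoid (P_mut P m Q) = {h \<in> Mtilde. \<forall>v\<in>supp F. 0 \<le> fst h \<bullet> v + snd h}"
    using S_monoid_hull[of "supp F"] Pm by (simp add: newton_def F_def)
  have fmL: "fst m \<in> lattice" and smZ: "snd m \<in> \<int>" using mM by (auto simp: Mtilde_def)
  have minc: "\<exists>q0\<in>supp g. \<forall>y\<in>supp g. c \<bullet> q0 \<le> c \<bullet> y" for c
    using ex_min[OF fing gne] by blast
  have etaq: "eta Q c = - (c \<bullet> q0)" if "q0 \<in> supp g" "\<forall>y\<in>supp g. c \<bullet> q0 \<le> c \<bullet> y" for c q0
    unfolding QH by (rule eta_hull[OF that])
  have etaZ: "eta Q c \<in> \<int>" if "c \<in> lattice" for c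
  proof -
    obtain q0 where q0: "q0 \<in> supp g" "\<forall>y\<in>supp g. c \<bullet> q0 \<le> c \<bullet> y" using minc by blast
    have "c \<bullet> q0 \<in> \<int>" using lattice_inner[OF that] q0(1) glat by blast
    then show ?thesis using etaq[OF q0] by simp
  qed
  have etashift: "eta Q (c - t *\<^sub>R fst m) = eta Q c" for c t
  proof -
    have "(\<lambda>v. v \<bullet> (c - t *\<^sub>R fst m)) ` Q = (\<lambda>v. v \<bullet> c) ` Q"
    proof (rule image_cong[OF refl])
      fix v assume "v \<in> Q"
      then have "fst m \<bullet> v = 0" using Qker by blast
      then show "v \<bullet> (c - t *\<^sub>R fst m) = v \<bullet> c" by (simp add: inner_diff_right inner_commute)
    qed
    then show ?thesis by (simp add: eta_def)
  qed
  have xi_fst: "fst (xi m' Q h) = fst h - eta Q (fst h) *\<^sub>R fst m'" for m' h by (simp add: xi_def)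
  have xi_snd: "snd (xi m' Q h) = snd h - eta Q (fst h) * snd m'" for m' h by (simp add: xi_def)
  have inv1: "xi (- m) Q (xi m Q h) = h" for h
  proof -
    have "eta Q (fst (xi m Q h)) = eta Q (fst h)" unfolding xi_fst by (rule etashift)
    then show ?thesis by (simp add: xi_def)
  qed
  have inv2: "xi m Q (xi (- m) Q h) = h" for h
  proof -
    have "fst (xi (- m) Q h) = fst h - (- eta Q (fst h)) *\<^sub>R fst m" unfolding xi_fst by simp
    then have "eta Q (fst (xi (- m) Q h)) = eta Q (fst h)" using etashift by metis
    then show ?thesis by (simp add: xi_def)
  qed
  have xiM: "xi m' Q h \<in> Mtilde" if "h \<in> Mtilde" "m' \<in> Mtilde" for h m'
  proof -
    have "eta Q (fst h) \<in> \<int>" using etaZ that by (auto simp: Mtilde_def)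
    moreover have "fst h \<in> lattice" "snd h \<in> \<int>" "fst m' \<in> lattice" "snd m' \<in> \<int>"
      using that by (auto simp: Mtilde_def)
    ultimately have "fst h - eta Q (fst h) *\<^sub>R fst m' \<in> lattice" "snd h - eta Q (fst h) * snd m' \<in> \<int>"
      by (auto intro!: lattice_diff lattice_scale)
    then show ?thesis unfolding Mtilde_def using xi_fst[of m' h] xi_snd[of m' h] by simp
  qed
  have mM': "- m \<in> Mtilde" using mM by (auto simp: Mtilde_def lattice_def)
  have key: "h \<in> S_monoid P \<longleftrightarrow> xi m Q h \<in> S_monoid (P_mut P m Q)" if h: "h \<in> Mtilde" for h
  proof -
    obtain c s where hcs: "h = (c, s)" by (cases h)
    obtain q0 where q0: "q0 \<in> supp g" "\<forall>y\<in>supp g. c \<bullet> q0 \<le> c \<bullet> y" using minc by blast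
    have e: "eta Q c = - (c \<bullet> q0)" by (rule etaq[OF q0])
    have eqv: "fst (xi m Q h) \<bullet> v + snd (xi m Q h) = c \<bullet> v + s + (c \<bullet> q0) * phi m v" for v
      unfolding xi_fst xi_snd hcs using e by (simp add: phi_def inner_diff_left algebra_simps)
    have L: "h \<in> S_monoid P \<longleftrightarrow> (\<forall>v\<in>supp f. 0 \<le> c \<bullet> v + s)" unfolding SP using h hcs by simp
    have R: "xi m Q h \<in> S_monoid (P_mut P m Q) \<longleftrightarrow> (\<forall>v\<in>supp F. 0 \<le> c \<bullet> v + s + (c \<bullet> q0) * phi m v)"
      unfolding SP' using xiM[OF h mM] eqv by simp
    show ?thesis unfolding L R F_def by (rule main_equiv[OF lf lg mut mM gker q0])
  qed
  have A: "xi m Q ` S_monoid P \<subseteq> S_monoid (P_mut P m Q)"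
  proof
    fix y assume "y \<in> xi m Q ` S_monoid P"
    then obtain h where h: "h \<in> S_monoid P" "y = xi m Q h" by blast
    have "h \<in> Mtilde" using h(1) unfolding SP by blast
    then show "y \<in> S_monoid (P_mut P m Q)" using key h by blast
  qed
  have B: "xi (- m) Q ` S_monoid (P_mut P m Q) \<subseteq> S_monoid P"
  proof
    fix h' assume "h' \<in> xi (- m) Q ` S_monoid (P_mut P m Q)"
    then obtain h where h: "h \<in> S_monoid (P_mut P m Q)" "h' = xi (- m) Q h" by blast
    have "h \<in> Mtilde" using h(1) SP' by blast
    then have "h' \<in> Mtilde" using xiM mM' h(2) by blast
    then show "h' \<in> S_monoid P" using key[of h'] h inv2 by simp
  qed
  have "bij_betw (xi m Q) (S_monoid P) (S_monoid (P_mut P m Q))"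
    by (rule bij_betw_byWitness[OF _ _ A B]) (use inv1 inv2 in auto)
  then show ?thesis using inv1 inv2 by blast
qed

end
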